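(* Let $\mu$ be a doubling measure on $\mathbb Z$ with $C^0_\mu=3$, and set $a_j=\mu(j)$. If there is $j_0\in\mathbb Z$ with $a_{j_0}<a_{j_0+1}$, then $a_j<a_{j+1}$ for every $j\le j_0$.
   Context: $\mathbb Z$ is the infinite path graph with edges $\{j,j+1\}$ and distance $|i-j|$. A measure is a weight function $\mu:\mathbb Z\to(0,\infty)$, $\mu(A)=\sum_{v\in A}\mu(v)$; $B(x,r)=\{y:|x-y|\le r\}$; $\mu$ is doubling if $\sup\{\mu(B(x,2k+1))/\mu(B(x,k)):x\in\mathbb Z,k\ge0\}<\infty$; $C^0_\mu=\sup_{x\in\mathbb Z}\mu(B(x,1))/\mu(x)$. *)

theory Defs
  imports Main "HOL.Real"
begin

definition zball :: "int \<Rightarrow> nat \<Rightarrow> int set" where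
  "zball x r = {y. \<bar>x - y\<bar> \<le> int r}"

text \<open>Measure of a set of vertices (only used on finite balls).\<close>
definition zmeas :: "(int \<Rightarrow> real) \<Rightarrow> int set \<Rightarrow> real" where
  "zmeas \<mu> A = (\<Sum>v\<in>A. \<mu> v)"

definition is_measure :: "(int \<Rightarrow> real) \<Rightarrow> bool" where
  "is_measure \<mu> \<longleftrightarrow> (\<forall>v. \<mu> v > 0)"

definition doubling :: "(int \<Rightarrow> real) \<Rightarrow> bool" where
  "doubling \<mu> \<longleftrightarrow> bdd_above {zmeas \<mu> (zball x (2*k+1)) / zmeas \<mu> (zball x k) | x k. True}"

definition C0 :: "(int \<Rightarrow> real) \<Rightarrow> real" where
  "C0 \<mu> = (SUP x. zmeas \<mu> (zball x 1) / \<mu> x)"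

end

theory Submission
  imports Defs
begin

lemma zball0: "zball x 0 = {x}"
  unfolding zball_def by auto

lemma zball1: "zball x 1 = {x - 1, x, x + 1}"
  unfolding zball_def by auto

theorem lemma4p5:
  fixes \<mu> :: "int \<Rightarrow> real" and j0 :: int
  assumes "is_measure \<mu>"
    and "doubling \<mu>"
    and "C0 \<mu> = 3"
    and "\<mu> j0 < \<mu> (j0 + 1)"
  shows "\<forall>j\<le>j0. \<mu> j < \<mu> (j + 1)"
proof -
  have pos: "\<And>v. \<mu> v > 0" using assms(1) unfolding is_measure_def by auto
  have sub: "range (\<lambda>x. zmeas \<mu> (zball x 1) / \<mu> x) \<subseteq>
     {zmeas \<mu> (zball x (2*k+1)) / zmeas \<mu> (zball x k) | x k. True}"
  proof
    fix y assume "y \<in> range (\<lambda>x. zmeas \<mu> (zball x 1) / \<mu> x)"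
    then obtain x where "y = zmeas \<mu> (zball x 1) / \<mu> x" by auto
    then have "y = zmeas \<mu> (zball x (2*0+1)) / zmeas \<mu> (zball x 0)"
      by (simp add: zball0 zmeas_def)
    then show "y \<in> {zmeas \<mu> (zball x (2*k+1)) / zmeas \<mu> (zball x k) | x k. True}" by blast
  qed
  have bdd: "bdd_above (range (\<lambda>x. zmeas \<mu> (zball x 1) / \<mu> x))"
    using assms(2) unfolding doubling_def by (rule bdd_above_mono[OF _ sub])
  have conc: "\<mu> (x - 1) + \<mu> (x + 1) \<le> 2 * \<mu> x" for x
  proof -
    have "zmeas \<mu> (zball x 1) / \<mu> x \<le> 3"
      using cSUP_upper[OF UNIV_I bdd] assms(3) unfolding C0_def by simp
    then have "zmeas \<mu> (zball x 1) \<le> 3 * \<mu> x" using pos[of x]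
      by (simp add: divide_le_eq)
    moreover have "zmeas \<mu> (zball x 1) = \<mu> (x - 1) + \<mu> x + \<mu> (x + 1)"
      unfolding zball1 zmeas_def by simp
    ultimately show ?thesis by simp
  qed
  have step: "\<mu> (j0 - int n + 1) - \<mu> (j0 - int n) \<ge> \<mu> (j0 + 1) - \<mu> j0" for n :: nat
  proof (induction n)
    case 0 then show ?case by simp
  next
    case (Suc n)
    have "\<mu> (j0 - int n - 1) + \<mu> (j0 - int n + 1) \<le> 2 * \<mu> (j0 - int n)" using conc .
    moreover have "j0 - int (Suc n) + 1 = j0 - int n" "j0 - int (Suc n) = j0 - int n - 1" by simp_all
    ultimately show ?case using Suc.IH by (simp only:)
  qed
  show ?thesis
  proof (intro allI impI)
    fix j assume "j \<le> j0"
    then have "j = j0 - int (nat (j0 - j))" by simp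
    then obtain n where "j = j0 - int n" by blast
    then show "\<mu> j < \<mu> (j + 1)" using step[of n] assms(4) by simp
  qed
qed

end
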